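(* Let $d\ge1$, $N\ge1$, $T>0$. Let $v_\textup{d}:\mathbb{R}^d\to\mathbb{R}^d$ and $K:\mathbb{R}^d\to\mathbb{R}^d$ be Lipschitz continuous with constants $\operatorname{Lip}(v_\textup{d}),\operatorname{Lip}(K)>0$, $K$ compactly supported, and set $\xi^N:=2\max\{\operatorname{Lip}(v_\textup{d}),N\operatorname{Lip}(K)\}$. Let $\mu_\cdot,\nu_\cdot\in C([0,T];\mathcal{M}^N_1(\mathbb{R}^d))$ be two solutions of the Cauchy problem with initial data $\bar\mu,\bar\nu\in\mathcal{M}^N_1(\mathbb{R}^d)$. Then \[ W_1(\mu_t,\nu_t)\le e^{\xi^Nt(1+e^{\xi^NT})}W_1(\bar\mu,\bar\nu)\qquad\forall\,t\in(0,T]. \]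
   Context: $\mathcal{M}^N_1(\mathbb{R}^d)$ is the set of positive Borel measures on $\mathbb{R}^d$ with total mass $N$ and finite first moment. For $\mu,\nu\in\mathcal{M}^N_1(\mathbb{R}^d)$, $W_1(\mu,\nu)=\inf_{\pi\in\Pi(\mu,\nu)}\int|x-y|\,d\pi(x,y)$, where $\Pi(\mu,\nu)$ is the set of measures on $\mathbb{R}^d\times\mathbb{R}^d$ with marginals $\mu$ and $\nu$; equivalently the supremum of $\int\phi\,d(\nu-\mu)$ over 1-Lipschitz $\phi:\mathbb{R}^d\to\mathbb{R}$. The velocity is $v[\mu](x)=v_\textup{d}(x)-\int K(y-x)\,d\mu(y)$. A solution of the Cauchy problem $\partial_t\mu_t+\nabla\cdot(\mu_tv[\mu_t])=0$, $\mu_0=\bar\mu$, on $[0,T]$ is a curve $\mu_\cdot\in C([0,T];\mathcal{M}^N_1(\mathbb{R}^d))$ (weak solution) given by $\mu_t=\gamma_t\#\bar\mu$, where the flow map satisfies $\gamma_t(x)=x+\int_0^tv[\mu_s](\gamma_s(x))\,ds$. *)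

theory Defs
  imports "HOL-Analysis.Analysis"
begin

definition Lip :: "('a::metric_space \<Rightarrow> 'b::metric_space) \<Rightarrow> real" where
  "Lip f = Inf {L. L-lipschitz_on UNIV f}"

definition M1 :: "real \<Rightarrow> 'a::euclidean_space measure set" where
  "M1 N = {\<mu>. sets \<mu> = sets borel \<and> emeasure \<mu> (space \<mu>) = ennreal N
              \<and> integrable \<mu> (\<lambda>x. norm x)}"

definition couplings :: "'a::euclidean_space measure \<Rightarrow> 'a measure \<Rightarrow> ('a \<times> 'a) measure set" where
  "couplings \<mu> \<nu> = {\<pi>. sets \<pi> = sets borel \<and> distr \<pi> borel fst = \<mu> \<and> distr \<pi> borel snd = \<nu>}"

definition W1 :: "'a::euclidean_space measure \<Rightarrow> 'a measure \<Rightarrow> real" where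
  "W1 \<mu> \<nu> = enn2real (INF \<pi>\<in>couplings \<mu> \<nu>. \<integral>\<^sup>+ p. ennreal (norm (fst p - snd p)) \<partial>\<pi>)"

definition vel :: "('a::euclidean_space \<Rightarrow> 'a) \<Rightarrow> ('a \<Rightarrow> 'a) \<Rightarrow> 'a measure \<Rightarrow> 'a \<Rightarrow> 'a" where
  "vel vd K \<mu> x = vd x - integral\<^sup>L \<mu> (\<lambda>y. K (y - x))"

definition is_solution ::
  "('a::euclidean_space \<Rightarrow> 'a) \<Rightarrow> ('a \<Rightarrow> 'a) \<Rightarrow> real \<Rightarrow> real \<Rightarrow> 'a measure \<Rightarrow> (real \<Rightarrow> 'a measure) \<Rightarrow> bool"
  where
  "is_solution vd K N T \<mu>bar \<mu> \<longleftrightarrow>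
     \<mu>bar \<in> M1 N \<and>
     (\<forall>t\<in>{0..T}. \<mu> t \<in> M1 N) \<and>
     (\<forall>t\<in>{0..T}. ((\<lambda>s. W1 (\<mu> s) (\<mu> t)) \<longlongrightarrow> 0) (at t within {0..T})) \<and>
     (\<exists>\<gamma> :: real \<Rightarrow> 'a \<Rightarrow> 'a.
        (\<forall>t\<in>{0..T}. \<gamma> t \<in> borel_measurable borel \<and> \<mu> t = distr \<mu>bar borel (\<gamma> t)) \<and>
        (\<forall>t\<in>{0..T}. \<forall>x. ((\<lambda>s. vel vd K (\<mu> s) (\<gamma> s x)) has_integral (\<gamma> t x - x)) {0..t}))"

end

theory Submission
  imports Defs
begin


lemma Lip_lipschitz:
  fixes f :: "'a::metric_space \<Rightarrow> 'b::metric_space"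
  assumes "\<exists>L. L-lipschitz_on UNIV f"
  shows "(Lip f)-lipschitz_on UNIV f"
proof -
  obtain L where L: "L-lipschitz_on UNIV f" using assms by blast
  let ?S = "{L. L-lipschitz_on UNIV f}"
  have ne: "?S \<noteq> {}" using L by blast
  have bdd: "bdd_below ?S" by (rule bdd_belowI[of _ 0]) (auto simp: lipschitz_on_def)
  have nn: "0 \<le> Lip f" unfolding Lip_def
    by (rule cInf_greatest[OF ne]) (auto simp: lipschitz_on_def)
  have "dist (f x) (f y) \<le> Lip f * dist x y" for x y
  proof (cases "x = y")
    case True then show ?thesis by simp
  next
    case False
    then have dp: "dist x y > 0" by simp
    have "dist (f x) (f y) / dist x y \<le> Lip f" unfolding Lip_def
      by (rule cInf_greatest[OF ne]) (use dp in \<open>auto simp: lipschitz_on_def divide_le_eq\<close>)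
    then show ?thesis using dp by (simp add: divide_le_eq)
  qed
  then show ?thesis using nn by (auto simp: lipschitz_on_def)
qed

lemma gronwall0:
  fixes u :: "real \<Rightarrow> real"
  assumes t: "0 \<le> t" and c: "0 \<le> c" and cont: "continuous_on {0..t} u"
    and le: "\<And>\<tau>. \<tau> \<in> {0..t} \<Longrightarrow> u \<tau> \<le> \<alpha> + c * integral {0..\<tau>} u"
  shows "u t \<le> \<alpha> * exp (c * t)"
proof -
  define h where "h \<tau> = exp (- c * \<tau>) * (\<alpha> + c * integral {0..\<tau>} u)" for \<tau>
  have hc: "continuous_on {0..t} h" unfolding h_def
    by (intro continuous_intros indefinite_integral_continuous_1 integrable_continuous_real cont)
  have "h t \<le> h 0"
  proof (rule DERIV_nonpos_imp_decreasing_open[OF t _ hc])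
    fix x assume x: "0 < x" "x < t"
    have d: "((\<lambda>x. integral {0..x} u) has_real_derivative u x) (at x)"
      using integral_has_real_derivative[OF cont, of x] x at_within_Icc_at[of 0 x t] by auto
    have "(h has_real_derivative
        (- c * exp (- c * x)) * (\<alpha> + c * integral {0..x} u) + exp (- c * x) * (c * u x)) (at x)"
      unfolding h_def by (auto intro!: derivative_eq_intros d)
    moreover have "(- c * exp (- c * x)) * (\<alpha> + c * integral {0..x} u) + exp (- c * x) * (c * u x) \<le> 0"
    proof -
      have "u x \<le> \<alpha> + c * integral {0..x} u" using le x by auto
      then have "c * u x \<le> c * (\<alpha> + c * integral {0..x} u)" using c by (simp add: mult_left_mono)
      then have "exp (- c * x) * (c * u x) \<le> exp (- c * x) * (c * (\<alpha> + c * integral {0..x} u))"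
        by (simp add: mult_left_mono)
      then show ?thesis by (simp add: algebra_simps)
    qed
    ultimately show "\<exists>y. (h has_real_derivative y) (at x) \<and> y \<le> 0" by blast
  qed
  then have "exp (- c * t) * (\<alpha> + c * integral {0..t} u) \<le> \<alpha>" by (simp add: h_def)
  then have "\<alpha> + c * integral {0..t} u \<le> \<alpha> * exp (c * t)"
    by (simp add: exp_minus field_simps)
  with le[of t] t show ?thesis by auto
qed

lemma gronwall1:
  fixes f b :: "real \<Rightarrow> real"
  assumes t: "0 \<le> t" and c: "0 \<le> c" and cont: "continuous_on {0..t} f"
    and bi: "b integrable_on {0..t}" and bnn: "\<And>s. s \<in> {0..t} \<Longrightarrow> 0 \<le> b s"
    and le: "\<And>\<tau>. \<tau> \<in> {0..t} \<Longrightarrow> f \<tau> \<le> f0 + integral {0..\<tau>} (\<lambda>s. c * f s + b s)"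
  shows "f t \<le> exp (c * t) * (f0 + integral {0..t} b)"
proof -
  have "f \<tau> \<le> (f0 + integral {0..t} b) + c * integral {0..\<tau>} f" if \<tau>: "\<tau> \<in> {0..t}" for \<tau>
  proof -
    have fi: "f integrable_on {0..\<tau>}"
      using \<tau> by (intro integrable_continuous_real continuous_on_subset[OF cont]) auto
    have bi': "b integrable_on {0..\<tau>}"
      using \<tau> by (intro integrable_on_subinterval[OF bi]) auto
    have "integral {0..\<tau>} (\<lambda>s. c * f s + b s) = c * integral {0..\<tau>} f + integral {0..\<tau>} b"
      using fi bi' by (subst integral_add) (auto intro: integrable_on_mult_right)
    moreover have "integral {0..\<tau>} b \<le> integral {0..t} b"
      using \<tau> by (intro integral_subset_le bi' bi) (auto intro: bnn)
    ultimately show ?thesis using le[OF \<tau>] by simp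
  qed
  from gronwall0[OF t c cont this] show ?thesis by (simp add: mult.commute)
qed



lemma meas_fst_borel: "fst \<in> measurable (borel :: ('a::second_countable_topology \<times> 'b::second_countable_topology) measure) borel"
  by (subst borel_prod[symmetric]) (rule measurable_fst)
lemma meas_snd_borel: "snd \<in> measurable (borel :: ('a::second_countable_topology \<times> 'b::second_countable_topology) measure) borel"
  by (subst borel_prod[symmetric]) (rule measurable_snd)

lemma meas_pair_borel:
  fixes f :: "'c \<Rightarrow> 'a::second_countable_topology" and g :: "'c \<Rightarrow> 'b::second_countable_topology"
  assumes "f \<in> borel_measurable M" "g \<in> borel_measurable M"
  shows "(\<lambda>x. (f x, g x)) \<in> borel_measurable M"
  using measurable_Pair[OF assms] by (simp add: borel_prod)

lemma coup_basic:
  fixes \<mu> \<nu> :: "'a::euclidean_space measure"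
  assumes pi: "\<pi> \<in> couplings \<mu> \<nu>" and mu: "\<mu> \<in> M1 N" and nu: "\<nu> \<in> M1 N" and N: "0 \<le> N"
  shows "space \<pi> = UNIV" "emeasure \<pi> UNIV = ennreal N" "finite_measure \<pi>"
    "measure \<pi> UNIV = N"
    "integrable \<pi> (\<lambda>p. norm (fst p))" "integrable \<pi> (\<lambda>p. norm (snd p))"
    "integrable \<pi> (\<lambda>p. norm (fst p - snd p))"
    "\<And>g. g \<in> borel_measurable borel \<Longrightarrow> (\<lambda>p. g (fst p)) \<in> borel_measurable \<pi>"
    "\<And>g. g \<in> borel_measurable borel \<Longrightarrow> (\<lambda>p. g (snd p)) \<in> borel_measurable \<pi>"
proof -
  have sp: "sets \<pi> = sets borel" and d1: "distr \<pi> borel fst = \<mu>" and d2: "distr \<pi> borel snd = \<nu>"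
    using pi by (auto simp: couplings_def)
  show spc: "space \<pi> = UNIV" using sets_eq_imp_space_eq[OF sp] by simp
  have mf: "fst \<in> measurable \<pi> borel" using measurable_cong_sets[OF sp refl] meas_fst_borel by blast
  have ms: "snd \<in> measurable \<pi> borel" using measurable_cong_sets[OF sp refl] meas_snd_borel by blast
  have "emeasure \<mu> (space \<mu>) = ennreal N" "sets \<mu> = sets borel" using mu by (auto simp: M1_def)
  then have "emeasure \<mu> UNIV = ennreal N" using sets_eq_imp_space_eq[of \<mu> borel] by simp
  then have "emeasure (distr \<pi> borel fst) UNIV = ennreal N" using d1 by simp
  then show em: "emeasure \<pi> UNIV = ennreal N" using mf by (simp add: emeasure_distr spc)
  show fm: "finite_measure \<pi>" by (rule finite_measureI) (use em spc in simp)
  show "measure \<pi> UNIV = N" using em N by (simp add: measure_def)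
  have i1: "integrable \<mu> (\<lambda>x. norm x)" "integrable \<nu> (\<lambda>x. norm x)" using mu nu by (auto simp: M1_def)
  show i1': "integrable \<pi> (\<lambda>p. norm (fst p))"
    using i1(1) d1 integrable_distr_eq[OF mf, of "\<lambda>x. norm x"] by simp
  show i2': "integrable \<pi> (\<lambda>p. norm (snd p))"
    using i1(2) d2 integrable_distr_eq[OF ms, of "\<lambda>x. norm x"] by simp
  show "integrable \<pi> (\<lambda>p. norm (fst p - snd p))"
  proof (rule Bochner_Integration.integrable_bound[OF Bochner_Integration.integrable_add[OF i1' i2']])
    show "(\<lambda>p. norm (fst p - snd p)) \<in> borel_measurable \<pi>" using mf ms by measurable
    show "AE x in \<pi>. norm (norm (fst x - snd x)) \<le> norm (norm (fst x) + norm (snd x))"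
      by (auto intro: norm_triangle_ineq4)
  qed
  show "\<And>g. g \<in> borel_measurable borel \<Longrightarrow> (\<lambda>p. g (fst p)) \<in> borel_measurable \<pi>"
    using mf by (auto intro: measurable_compose)
  show "\<And>g. g \<in> borel_measurable borel \<Longrightarrow> (\<lambda>p. g (snd p)) \<in> borel_measurable \<pi>"
    using ms by (auto intro: measurable_compose)
qed


lemma M1_facts:
  assumes "\<mu> \<in> M1 N" "0 \<le> N"
  shows "sets \<mu> = sets borel" "space \<mu> = UNIV" "emeasure \<mu> UNIV = ennreal N"
    "finite_measure \<mu>" "integrable \<mu> (\<lambda>x. norm x)" "measure \<mu> UNIV = N"
proof -
  show s: "sets \<mu> = sets borel" using assms by (auto simp: M1_def)
  show sp: "space \<mu> = UNIV" using sets_eq_imp_space_eq[OF s] by simp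
  show e: "emeasure \<mu> UNIV = ennreal N" using assms sp by (auto simp: M1_def)
  show "finite_measure \<mu>" by (rule finite_measureI) (use e sp in simp)
  show "integrable \<mu> (\<lambda>x. norm x)" using assms by (auto simp: M1_def)
  show "measure \<mu> UNIV = N" using e assms by (simp add: measure_def)
qed
lemma prod_coupling:
  fixes \<mu> \<nu> :: "'a::euclidean_space measure"
  assumes mu: "\<mu> \<in> M1 N" and nu: "\<nu> \<in> M1 N" and N: "0 < N"
  shows "scale_measure (ennreal (1/N)) (\<mu> \<Otimes>\<^sub>M \<nu>) \<in> couplings \<mu> \<nu>"
proof -
  note m = M1_facts[OF mu less_imp_le[OF N]]
  note n = M1_facts[OF nu less_imp_le[OF N]]
  interpret fm: finite_measure \<mu> by (rule m(4))
  interpret fn: finite_measure \<nu> by (rule n(4))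
  let ?P = "scale_measure (ennreal (1/N)) (\<mu> \<Otimes>\<^sub>M \<nu>)"
  have sP: "sets ?P = sets (borel :: ('a \<times> 'a) measure)"
  proof -
    have "sets ?P = sets (\<mu> \<Otimes>\<^sub>M \<nu>)" by simp
    also have "\<dots> = sets (borel \<Otimes>\<^sub>M borel)" by (rule sets_pair_measure_cong[OF m(1) n(1)])
    also have "\<dots> = sets (borel :: ('a \<times> 'a) measure)" by (simp only: borel_prod)
    finally show ?thesis .
  qed
  have spP: "space ?P = UNIV" by (simp add: space_scale_measure space_pair_measure m(2) n(2))
  have mf: "fst \<in> measurable ?P borel"
    using measurable_cong_sets[OF sP refl] meas_fst_borel by blast
  have ms: "snd \<in> measurable ?P borel"
    using measurable_cong_sets[OF sP refl] meas_snd_borel by blast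
  have inv: "ennreal (1/N) * (x * ennreal N) = x" for x
  proof -
    have "ennreal (1/N) * ennreal N = 1" using N by (simp add: ennreal_mult[symmetric])
    then show ?thesis by (metis mult.assoc mult.commute mult_1)
  qed
  have "distr ?P borel fst = \<mu>"
  proof (rule measure_eqI)
    show "sets (distr ?P borel fst) = sets \<mu>" using m(1) by simp
    fix A assume "A \<in> sets (distr ?P borel fst)"
    then have A: "A \<in> sets \<mu>" using m(1) by simp
    have "fst -` A \<inter> space ?P = A \<times> space \<nu>" using spP n(2) by auto
    moreover have "A \<in> sets borel" using A m(1) by simp
    ultimately have "emeasure (distr ?P borel fst) A = ennreal (1/N) * emeasure (\<mu> \<Otimes>\<^sub>M \<nu>) (A \<times> space \<nu>)"
      using mf by (simp add: emeasure_distr)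
    also have "\<dots> = emeasure \<mu> A"
      using fn.emeasure_pair_measure_Times[OF A sets.top] n(3) n(2) by (simp add: inv)
    finally show "emeasure (distr ?P borel fst) A = emeasure \<mu> A" .
  qed
  moreover have "distr ?P borel snd = \<nu>"
  proof (rule measure_eqI)
    show "sets (distr ?P borel snd) = sets \<nu>" using n(1) by simp
    fix A assume "A \<in> sets (distr ?P borel snd)"
    then have A: "A \<in> sets \<nu>" using n(1) by simp
    have "snd -` A \<inter> space ?P = space \<mu> \<times> A" using spP m(2) by auto
    moreover have "A \<in> sets borel" using A n(1) by simp
    ultimately have "emeasure (distr ?P borel snd) A = ennreal (1/N) * emeasure (\<mu> \<Otimes>\<^sub>M \<nu>) (space \<mu> \<times> A)"
      using ms by (simp add: emeasure_distr)
    also have "\<dots> = ennreal (1/N) * (emeasure \<nu> A * ennreal N)"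
    proof -
      have "emeasure (\<mu> \<Otimes>\<^sub>M \<nu>) (space \<mu> \<times> A) = emeasure \<mu> (space \<mu>) * emeasure \<nu> A"
        using A by (intro fn.emeasure_pair_measure_Times) auto
      then show ?thesis using m(3) m(2) by (simp add: mult.commute)
    qed
    also have "\<dots> = emeasure \<nu> A" by (rule inv)
    finally show "emeasure (distr ?P borel snd) A = emeasure \<nu> A" .
  qed
  ultimately show ?thesis using sP by (simp add: couplings_def)
qed

lemma cost_eq:
  fixes \<mu> \<nu> :: "'a::euclidean_space measure"
  assumes pi: "\<pi> \<in> couplings \<mu> \<nu>" and mu: "\<mu> \<in> M1 N" and nu: "\<nu> \<in> M1 N" and N: "0 \<le> N"
  shows "(\<integral>\<^sup>+ p. ennreal (norm (fst p - snd p)) \<partial>\<pi>) = ennreal (\<integral> p. norm (fst p - snd p) \<partial>\<pi>)"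
  using coup_basic(7)[OF pi mu nu N] by (intro nn_integral_eq_integral) auto

lemma W1_finite:
  fixes \<mu> \<nu> :: "'a::euclidean_space measure"
  assumes mu: "\<mu> \<in> M1 N" and nu: "\<nu> \<in> M1 N" and N: "0 < N"
  shows "(INF \<pi>\<in>couplings \<mu> \<nu>. \<integral>\<^sup>+ p. ennreal (norm (fst p - snd p)) \<partial>\<pi>) = ennreal (W1 \<mu> \<nu>)"
proof -
  let ?P = "scale_measure (ennreal (1/N)) (\<mu> \<Otimes>\<^sub>M \<nu>)"
  have P: "?P \<in> couplings \<mu> \<nu>" by (rule prod_coupling[OF mu nu N])
  have "(INF \<pi>\<in>couplings \<mu> \<nu>. \<integral>\<^sup>+ p. ennreal (norm (fst p - snd p)) \<partial>\<pi>)
      \<le> (\<integral>\<^sup>+ p. ennreal (norm (fst p - snd p)) \<partial>?P)" by (rule INF_lower[OF P])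
  also have "\<dots> < \<infinity>" using cost_eq[OF P mu nu] N by simp
  finally show ?thesis unfolding W1_def by (simp add: less_top)
qed

lemma W1_le_coupling:
  fixes \<mu> \<nu> :: "'a::euclidean_space measure"
  assumes pi: "\<pi> \<in> couplings \<mu> \<nu>" and "0 \<le> c"
    and le: "(\<integral>\<^sup>+ p. ennreal (norm (fst p - snd p)) \<partial>\<pi>) \<le> ennreal c"
  shows "W1 \<mu> \<nu> \<le> c"
proof -
  have "(INF \<pi>\<in>couplings \<mu> \<nu>. \<integral>\<^sup>+ p. ennreal (norm (fst p - snd p)) \<partial>\<pi>) \<le> ennreal c"
    using INF_lower[OF pi] le by (rule order_trans)
  from enn2real_mono[OF this] show ?thesis unfolding W1_def using assms(2) by simp
qed



lemma cont_meas:
  assumes "continuous_on UNIV g" "sets M = sets borel"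
  shows "g \<in> borel_measurable M"
  using measurable_cong_sets[OF assms(2) refl] borel_measurable_continuous_onI[OF assms(1)] by blast

lemma lip_norm_bound:
  assumes "L-lipschitz_on UNIV f"
  shows "norm (f z) \<le> norm (f 0) + L * norm (z::'a::real_normed_vector)"
proof -
  have "dist (f z) (f 0) \<le> L * dist z 0" using assms unfolding lipschitz_on_def by blast
  then have "norm (f z - f 0) \<le> L * norm z" by (simp add: dist_norm)
  then show ?thesis using norm_triangle_ineq2[of "f z" "f 0"] by linarith
qed

lemma K_int_bound:
  fixes K :: "'a::euclidean_space \<Rightarrow> 'a"
  assumes mu: "\<mu> \<in> M1 N" and N: "0 \<le> N" and kb: "\<And>z. norm (K z) \<le> \<kappa>" and kc: "continuous_on UNIV K"
  shows "integrable \<mu> (\<lambda>y. K (y - z))" "norm (integral\<^sup>L \<mu> (\<lambda>y. K (y - z))) \<le> N * \<kappa>"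
proof -
  note m = M1_facts[OF mu N]
  interpret finite_measure \<mu> by (rule m(4))
  have meas: "(\<lambda>y. K (y - z)) \<in> borel_measurable \<mu>"
    by (rule cont_meas[OF _ m(1)]) (intro continuous_intros continuous_on_compose2[OF kc]; auto)
  show int: "integrable \<mu> (\<lambda>y. K (y - z))"
    by (rule integrable_const_bound[where B=\<kappa>]) (use kb meas in auto)
  have "norm (integral\<^sup>L \<mu> (\<lambda>y. K (y - z))) \<le> integral\<^sup>L \<mu> (\<lambda>y. norm (K (y - z)))"
    by (rule integral_norm_bound)
  also have "\<dots> \<le> integral\<^sup>L \<mu> (\<lambda>y. \<kappa>)"
    by (rule integral_mono) (use int kb in auto)
  also have "\<dots> = N * \<kappa>" using m(6) m(2) by simp
  finally show "norm (integral\<^sup>L \<mu> (\<lambda>y. K (y - z))) \<le> N * \<kappa>" .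
qed

lemma vel_bound:
  fixes K vd :: "'a::euclidean_space \<Rightarrow> 'a"
  assumes mu: "\<mu> \<in> M1 N" and N: "0 \<le> N" and kb: "\<And>z. norm (K z) \<le> \<kappa>" and kc: "continuous_on UNIV K"
    and lv: "Lv-lipschitz_on UNIV vd"
  shows "norm (vel vd K \<mu> z) \<le> norm (vd 0) + Lv * norm z + N * \<kappa>"
proof -
  have "norm (vel vd K \<mu> z) \<le> norm (vd z) + norm (integral\<^sup>L \<mu> (\<lambda>y. K (y - z)))"
    unfolding vel_def by (rule norm_triangle_ineq4)
  then show ?thesis using K_int_bound(2)[OF mu N kb kc, of z] lip_norm_bound[OF lv, of z] by linarith
qed

lemma sol_props:
  fixes vd K :: "'a::euclidean_space \<Rightarrow> 'a"
  assumes sol: "is_solution vd K N T \<mu>bar \<mu>" and N: "0 \<le> N" and T: "0 \<le> T"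
    and lv: "Lv-lipschitz_on UNIV vd" and kb: "\<And>z. norm (K z) \<le> \<kappa>" and kc: "continuous_on UNIV K"
  obtains \<gamma> where "\<And>t. t\<in>{0..T} \<Longrightarrow> \<gamma> t \<in> borel_measurable borel"
    "\<And>t. t\<in>{0..T} \<Longrightarrow> \<mu> t = distr \<mu>bar borel (\<gamma> t)"
    "\<And>t x. t\<in>{0..T} \<Longrightarrow> ((\<lambda>s. vel vd K (\<mu> s) (\<gamma> s x)) has_integral (\<gamma> t x - x)) {0..t}"
    "\<And>x. continuous_on {0..T} (\<lambda>s. \<gamma> s x)"
    "\<And>x s. s\<in>{0..T} \<Longrightarrow> norm (\<gamma> s x) \<le> exp (Lv * T) * (norm x + (norm (vd 0) + N * \<kappa>) * T)"
proof -
  from sol obtain \<gamma> :: "real \<Rightarrow> 'a \<Rightarrow> 'a" where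
    g1: "\<And>t. t\<in>{0..T} \<Longrightarrow> \<gamma> t \<in> borel_measurable borel \<and> \<mu> t = distr \<mu>bar borel (\<gamma> t)" and
    g2: "\<And>t x. t\<in>{0..T} \<Longrightarrow> ((\<lambda>s. vel vd K (\<mu> s) (\<gamma> s x)) has_integral (\<gamma> t x - x)) {0..t}" and
    muM: "\<And>t. t\<in>{0..T} \<Longrightarrow> \<mu> t \<in> M1 N"
    unfolding is_solution_def by blast
  have Lv: "0 \<le> Lv" using lv lipschitz_on_nonneg by blast
  define A where "A = norm (vd 0) + N * \<kappa>"
  have kap: "0 \<le> \<kappa>" using kb[of 0] norm_ge_zero order_trans by blast
  have A: "0 \<le> A" unfolding A_def using N kap by simp
  have vint: "(\<lambda>s. vel vd K (\<mu> s) (\<gamma> s x)) integrable_on {0..T}" for x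
    using g2[of T x] T by (meson atLeastAtMost_iff has_integral_integrable order_refl)
  have geq: "\<gamma> t x = x + integral {0..t} (\<lambda>s. vel vd K (\<mu> s) (\<gamma> s x))" if "t \<in> {0..T}" for t x
    using g2[OF that, of x] by (simp add: integral_unique)
  have cont: "continuous_on {0..T} (\<lambda>s. \<gamma> s x)" for x
  proof -
    have "continuous_on {0..T} (\<lambda>s. x + integral {0..s} (\<lambda>s. vel vd K (\<mu> s) (\<gamma> s x)))"
      by (intro continuous_intros indefinite_integral_continuous_1 vint)
    then show ?thesis by (rule continuous_on_eq) (simp add: geq)
  qed
  have bound: "norm (\<gamma> s x) \<le> exp (Lv * T) * (norm x + A * T)" if s: "s \<in> {0..T}" for x s
  proof -
    have le: "norm (\<gamma> \<tau> x) \<le> norm x + integral {0..\<tau>} (\<lambda>r. Lv * norm (\<gamma> r x) + A)"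
      if \<tau>: "\<tau> \<in> {0..s}" for \<tau>
    proof -
      have \<tau>T: "\<tau> \<in> {0..T}" using \<tau> s by auto
      have "norm (integral {0..\<tau>} (\<lambda>r. vel vd K (\<mu> r) (\<gamma> r x))) \<le> integral {0..\<tau>} (\<lambda>r. Lv * norm (\<gamma> r x) + A)"
      proof (rule integral_norm_bound_integral)
        show "(\<lambda>r. vel vd K (\<mu> r) (\<gamma> r x)) integrable_on {0..\<tau>}" using g2[OF \<tau>T, of x] by (rule has_integral_integrable)
        show "(\<lambda>r. Lv * norm (\<gamma> r x) + A) integrable_on {0..\<tau>}"
          using \<tau>T by (intro integrable_continuous_real continuous_intros continuous_on_subset[OF cont]) auto
        fix r assume "r \<in> {0..\<tau>}"
        then have "r \<in> {0..T}" using \<tau>T by auto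
        from vel_bound[OF muM[OF this] N kb kc lv, of "\<gamma> r x"]
        show "norm (vel vd K (\<mu> r) (\<gamma> r x)) \<le> Lv * norm (\<gamma> r x) + A" by (simp add: A_def)
      qed
      then show ?thesis using geq[OF \<tau>T, of x] norm_triangle_ineq[of x] by (smt (verit))
    qed
    have "norm (\<gamma> s x) \<le> exp (Lv * s) * (norm x + integral {0..s} (\<lambda>r. A))"
    proof (rule gronwall1[OF _ Lv _ _ _ le])
      show "continuous_on {0..s} (\<lambda>\<tau>. norm (\<gamma> \<tau> x))"
        using s by (intro continuous_on_norm continuous_on_subset[OF cont]) auto
    qed (use s A in auto)
    also have "\<dots> = exp (Lv * s) * (norm x + A * s)" using s by simp
    also have "\<dots> \<le> exp (Lv * T) * (norm x + A * T)"
      using s Lv A by (intro mult_mono) (auto intro: mult_left_mono)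
    finally show ?thesis .
  qed
  show ?thesis
    by (rule that) (use g1 g2 cont bound in \<open>auto simp: A_def\<close>)
qed



lemma norm3: "norm (x - y - z) \<le> norm x + norm y + norm (z::'a::real_normed_vector)"
  using norm_triangle_ineq4[of "x - y" z] norm_triangle_ineq4[of x y] by linarith

lemma main_est:
  fixes vd K :: "'a::euclidean_space \<Rightarrow> 'a"
  assumes N: "0 < N" and T: "0 \<le> T"
    and lv: "Lv-lipschitz_on UNIV vd" and lk: "LK-lipschitz_on UNIV K" and kb: "\<And>z. norm (K z) \<le> \<kappa>"
    and solm: "is_solution vd K N T \<mu>bar \<mu>" and soln: "is_solution vd K N T \<nu>bar \<nu>"
    and pi: "\<pi> \<in> couplings \<mu>bar \<nu>bar"
    and t: "t \<in> {0..T}"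
  shows "W1 (\<mu> t) (\<nu> t) \<le> exp ((Lv + N * LK) * t) * (\<integral> p. norm (fst p - snd p) \<partial>\<pi>)
            * exp (exp ((Lv + N * LK) * t) * (N * LK) * t)"
proof -
  have N0: "0 \<le> N" using N by simp
  have kc: "continuous_on UNIV K" using lk by (rule lipschitz_on_continuous_on)
  have Lv: "0 \<le> Lv" using lv lipschitz_on_nonneg by blast
  have LK: "0 \<le> LK" using lk lipschitz_on_nonneg by blast
  have mub: "\<mu>bar \<in> M1 N" and nub: "\<nu>bar \<in> M1 N" using solm soln by (auto simp: is_solution_def)
  have muM: "\<And>s. s\<in>{0..T} \<Longrightarrow> \<mu> s \<in> M1 N" and nuM: "\<And>s. s\<in>{0..T} \<Longrightarrow> \<nu> s \<in> M1 N"
    using solm soln by (auto simp: is_solution_def)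
  note cb = coup_basic[OF pi mub nub N0]
  interpret fpi: finite_measure \<pi> by (rule cb(3))
  have spi: "sets \<pi> = sets borel" using pi by (simp add: couplings_def)
  have d1: "distr \<pi> borel fst = \<mu>bar" and d2: "distr \<pi> borel snd = \<nu>bar" using pi by (auto simp: couplings_def)
  have mfst: "fst \<in> measurable \<pi> borel" using measurable_cong_sets[OF spi refl] meas_fst_borel by blast
  have msnd: "snd \<in> measurable \<pi> borel" using measurable_cong_sets[OF spi refl] meas_snd_borel by blast
  obtain \<gamma> where gm: "\<And>t. t\<in>{0..T} \<Longrightarrow> \<gamma> t \<in> borel_measurable borel"
    and gd: "\<And>t. t\<in>{0..T} \<Longrightarrow> \<mu> t = distr \<mu>bar borel (\<gamma> t)"
    and gi: "\<And>t x. t\<in>{0..T} \<Longrightarrow> ((\<lambda>s. vel vd K (\<mu> s) (\<gamma> s x)) has_integral (\<gamma> t x - x)) {0..t}"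
    and gc: "\<And>x. continuous_on {0..T} (\<lambda>s. \<gamma> s x)"
    and gb: "\<And>x s. s\<in>{0..T} \<Longrightarrow> norm (\<gamma> s x) \<le> exp (Lv * T) * (norm x + (norm (vd 0) + N * \<kappa>) * T)"
    using sol_props[OF solm N0 T lv kb kc] by blast
  obtain g where hm: "\<And>t. t\<in>{0..T} \<Longrightarrow> g t \<in> borel_measurable borel"
    and hd: "\<And>t. t\<in>{0..T} \<Longrightarrow> \<nu> t = distr \<nu>bar borel (g t)"
    and hi: "\<And>t x. t\<in>{0..T} \<Longrightarrow> ((\<lambda>s. vel vd K (\<nu> s) (g s x)) has_integral (g t x - x)) {0..t}"
    and hc: "\<And>x. continuous_on {0..T} (\<lambda>s. g s x)"
    and hb: "\<And>x s. s\<in>{0..T} \<Longrightarrow> norm (g s x) \<le> exp (Lv * T) * (norm x + (norm (vd 0) + N * \<kappa>) * T)"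
    using sol_props[OF soln N0 T lv kb kc] by blast
  define E1 where "E1 = exp (Lv * T)"
  define A where "A = norm (vd 0) + N * \<kappa>"
  define F where "F s p = norm (\<gamma> s (fst p) - g s (snd p))" for s and p :: "'a \<times> 'a"
  define D where "D s = (\<integral> p. F s p \<partial>\<pi>)" for s
  define w where "w p = E1 * (norm (fst p) + A * T) + E1 * (norm (snd p) + A * T)" for p :: "'a \<times> 'a"
  define c where "c = Lv + N * LK"
  define C where "C = (\<integral> p. norm (fst p - snd p) \<partial>\<pi>)"
  have c0: "0 \<le> c" unfolding c_def using Lv LK N0 by simp
  have kap: "0 \<le> \<kappa>" using kb[of 0] norm_ge_zero order_trans by blast
  have w0: "0 \<le> w p" for p unfolding w_def E1_def A_def using kap N0 T by simp
  have wint: "integrable \<pi> w" unfolding w_def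
    using cb(5) cb(6) by (intro Bochner_Integration.integrable_add integrable_mult_right) auto
  have gmp: "(\<lambda>p. \<gamma> s (fst p)) \<in> borel_measurable \<pi>" if "s \<in> {0..T}" for s
    using cb(8)[OF gm[OF that]] .
  have hmp: "(\<lambda>p. g s (snd p)) \<in> borel_measurable \<pi>" if "s \<in> {0..T}" for s
    using cb(9)[OF hm[OF that]] .
  have Fmeas: "F s \<in> borel_measurable \<pi>" if "s \<in> {0..T}" for s
    unfolding F_def using gmp[OF that] hmp[OF that] by measurable
  have Fw: "norm (F s p) \<le> w p" if "s \<in> {0..T}" for s p
  proof -
    have "norm (F s p) \<le> norm (\<gamma> s (fst p)) + norm (g s (snd p))"
      unfolding F_def by (simp add: norm_triangle_ineq4)
    then show ?thesis using gb[OF that, of "fst p"] hb[OF that, of "snd p"] unfolding w_def E1_def A_def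
      by linarith
  qed
  have Fint: "integrable \<pi> (F s)" if "s \<in> {0..T}" for s
  proof (rule Bochner_Integration.integrable_bound[OF wint Fmeas[OF that]])
    show "AE x in \<pi>. norm (F s x) \<le> norm (w x)"
    proof (rule AE_I2)
      fix x show "norm (F s x) \<le> norm (w x)" using Fw[OF that, of x] w0[of x] by simp
    qed
  qed
  have F0: "0 \<le> F s p" for s p unfolding F_def by simp
  have D0: "0 \<le> D s" for s unfolding D_def using F0 by simp
  have Fc: "continuous_on {0..T} (\<lambda>s. F s p)" for p
    unfolding F_def by (intro continuous_intros gc hc)
  have Dc: "continuous_on {0..T} D"
  proof (rule continuous_on_sequentiallyI)
    fix u a assume u: "\<forall>n. u n \<in> {0..T}" and a: "a \<in> {0..T}" and ua: "u \<longlonglongrightarrow> a"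
    show "(\<lambda>n. D (u n)) \<longlonglongrightarrow> D a" unfolding D_def
    proof (rule integral_dominated_convergence[where w=w])
      show "F a \<in> borel_measurable \<pi>" by (rule Fmeas[OF a])
      show "F (u n) \<in> borel_measurable \<pi>" for n using u Fmeas by blast
      show "integrable \<pi> w" by (rule wint)
      show "AE x in \<pi>. (\<lambda>n. F (u n) x) \<longlonglongrightarrow> F a x"
      proof (rule AE_I2)
        fix p
        from Fc[of p] a u ua show "(\<lambda>n. F (u n) p) \<longlonglongrightarrow> F a p"
          unfolding continuous_on_sequentially comp_def by blast
      qed
      show "AE x in \<pi>. norm (F (u n) x) \<le> w x" for n using Fw u by blast
    qed
  qed
  have W1le: "W1 (\<mu> s) (\<nu> s) \<le> D s" if s: "s \<in> {0..T}" for s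
  proof -
    let ?P = "distr \<pi> borel (\<lambda>p. (\<gamma> s (fst p), g s (snd p)))"
    have pm: "(\<lambda>p. (\<gamma> s (fst p), g s (snd p))) \<in> measurable \<pi> borel"
      by (rule meas_pair_borel[OF gmp[OF s] hmp[OF s]])
    have "distr ?P borel fst = distr \<pi> borel (fst \<circ> (\<lambda>p. (\<gamma> s (fst p), g s (snd p))))"
      by (rule distr_distr[OF meas_fst_borel pm])
    also have "\<dots> = distr \<pi> borel (\<gamma> s \<circ> fst)" by (simp add: comp_def)
    also have "\<dots> = distr (distr \<pi> borel fst) borel (\<gamma> s)"
      by (rule distr_distr[symmetric, OF gm[OF s] mfst])
    also have "\<dots> = \<mu> s" using d1 gd[OF s] by simp
    finally have m1: "distr ?P borel fst = \<mu> s" .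
    have "distr ?P borel snd = distr \<pi> borel (snd \<circ> (\<lambda>p. (\<gamma> s (fst p), g s (snd p))))"
      by (rule distr_distr[OF meas_snd_borel pm])
    also have "\<dots> = distr \<pi> borel (g s \<circ> snd)" by (simp add: comp_def)
    also have "\<dots> = distr (distr \<pi> borel snd) borel (g s)"
      by (rule distr_distr[symmetric, OF hm[OF s] msnd])
    also have "\<dots> = \<nu> s" using d2 hd[OF s] by simp
    finally have m2: "distr ?P borel snd = \<nu> s" .
    have Pc: "?P \<in> couplings (\<mu> s) (\<nu> s)" using m1 m2 by (simp add: couplings_def)
    have "(\<integral>\<^sup>+ p. ennreal (norm (fst p - snd p)) \<partial>?P) = (\<integral>\<^sup>+ p. ennreal (F s p) \<partial>\<pi>)"
      unfolding F_def by (subst nn_integral_distr[OF pm]) (auto intro!: borel_measurable_continuous_onI continuous_intros)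
    also have "\<dots> = ennreal (D s)" unfolding D_def
      by (rule nn_integral_eq_integral[OF Fint[OF s]]) (simp add: F0)
    finally show ?thesis by (intro W1_le_coupling[OF Pc D0]) simp
  qed
  have lipd: "norm (f u - f v) \<le> L * norm (u - v)" if "L-lipschitz_on UNIV f" for L and f :: "'a \<Rightarrow> 'a" and u v
    using that unfolding lipschitz_on_def by (metis UNIV_I dist_norm)
  have Kmeas: "(\<lambda>y. K (y - a)) \<in> borel_measurable borel" for a
    by (intro borel_measurable_continuous_onI continuous_on_compose2[OF kc] continuous_intros) auto
  have veldiff: "norm (vel vd K (\<mu> s) a - vel vd K (\<nu> s) b) \<le> c * norm (a - b) + LK * D s"
    if s: "s \<in> {0..T}" for s a b
  proof -
    have mus: "\<mu> s = distr \<pi> borel (\<lambda>p. \<gamma> s (fst p))"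
      using d1 gd[OF s] distr_distr[OF gm[OF s] mfst] by (simp add: comp_def)
    have nus: "\<nu> s = distr \<pi> borel (\<lambda>p. g s (snd p))"
      using d2 hd[OF s] distr_distr[OF hm[OF s] msnd] by (simp add: comp_def)
    have I1: "integral\<^sup>L (\<mu> s) (\<lambda>y. K (y - a)) = (\<integral>p. K (\<gamma> s (fst p) - a) \<partial>\<pi>)"
      unfolding mus by (rule integral_distr[OF gmp[OF s] Kmeas])
    have I2: "integral\<^sup>L (\<nu> s) (\<lambda>y. K (y - a)) = (\<integral>p. K (g s (snd p) - a) \<partial>\<pi>)"
      unfolding nus by (rule integral_distr[OF hmp[OF s] Kmeas])
    have i1: "integrable \<pi> (\<lambda>p. K (\<gamma> s (fst p) - a))"
      by (rule fpi.integrable_const_bound[where B=\<kappa>]) (use kb measurable_compose[OF gmp[OF s] Kmeas] in auto)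
    have i2: "integrable \<pi> (\<lambda>p. K (g s (snd p) - a))"
      by (rule fpi.integrable_const_bound[where B=\<kappa>]) (use kb measurable_compose[OF hmp[OF s] Kmeas] in auto)
    have e1: "norm (integral\<^sup>L (\<mu> s) (\<lambda>y. K (y - a)) - integral\<^sup>L (\<nu> s) (\<lambda>y. K (y - a))) \<le> LK * D s"
    proof -
      have "norm (integral\<^sup>L (\<mu> s) (\<lambda>y. K (y - a)) - integral\<^sup>L (\<nu> s) (\<lambda>y. K (y - a)))
          = norm (\<integral>p. K (\<gamma> s (fst p) - a) - K (g s (snd p) - a) \<partial>\<pi>)"
        using I1 I2 i1 i2 by simp
      also have "\<dots> \<le> (\<integral>p. LK * F s p \<partial>\<pi>)"
      proof (rule Bochner_Integration.integral_norm_bound_integral)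
        show "integrable \<pi> (\<lambda>p. K (\<gamma> s (fst p) - a) - K (g s (snd p) - a))" using i1 i2 by simp
        show "integrable \<pi> (\<lambda>p. LK * F s p)" using Fint[OF s] by simp
        fix p show "norm (K (\<gamma> s (fst p) - a) - K (g s (snd p) - a)) \<le> LK * F s p"
          using lipd[OF lk, of "\<gamma> s (fst p) - a" "g s (snd p) - a"] unfolding F_def by simp
      qed
      also have "\<dots> = LK * D s" unfolding D_def by simp
      finally show ?thesis .
    qed
    have e2: "norm (integral\<^sup>L (\<nu> s) (\<lambda>y. K (y - a)) - integral\<^sup>L (\<nu> s) (\<lambda>y. K (y - b))) \<le> N * LK * norm (a - b)"
    proof -
      note nf = M1_facts[OF nuM[OF s] N0]
      note j1 = K_int_bound(1)[OF nuM[OF s] N0 kb kc, of a]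
      note j2 = K_int_bound(1)[OF nuM[OF s] N0 kb kc, of b]
      have "norm (integral\<^sup>L (\<nu> s) (\<lambda>y. K (y - a)) - integral\<^sup>L (\<nu> s) (\<lambda>y. K (y - b)))
          = norm (\<integral>y. K (y - a) - K (y - b) \<partial>\<nu> s)" using j1 j2 by simp
      also have "\<dots> \<le> (\<integral>y. LK * norm (a - b) \<partial>\<nu> s)"
      proof (rule Bochner_Integration.integral_norm_bound_integral)
        show "integrable (\<nu> s) (\<lambda>y. K (y - a) - K (y - b))" using j1 j2 by simp
        show "integrable (\<nu> s) (\<lambda>y. LK * norm (a - b))" using nf(4) finite_measure.integrable_const by blast
        fix y show "norm (K (y - a) - K (y - b)) \<le> LK * norm (a - b)"
          using lipd[OF lk, of "y - a" "y - b"] by (simp add: norm_minus_commute)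
      qed
      also have "\<dots> = N * LK * norm (a - b)" using nf(2) nf(6) by simp
      finally show ?thesis .
    qed
    have e3: "norm (vd a - vd b) \<le> Lv * norm (a - b)" by (rule lipd[OF lv])
    have "vel vd K (\<mu> s) a - vel vd K (\<nu> s) b = (vd a - vd b)
        - (integral\<^sup>L (\<mu> s) (\<lambda>y. K (y - a)) - integral\<^sup>L (\<nu> s) (\<lambda>y. K (y - a)))
        - (integral\<^sup>L (\<nu> s) (\<lambda>y. K (y - a)) - integral\<^sup>L (\<nu> s) (\<lambda>y. K (y - b)))"
      unfolding vel_def by (simp add: algebra_simps)
    then have "norm (vel vd K (\<mu> s) a - vel vd K (\<nu> s) b) \<le> norm (vd a - vd b)
        + norm (integral\<^sup>L (\<mu> s) (\<lambda>y. K (y - a)) - integral\<^sup>L (\<nu> s) (\<lambda>y. K (y - a)))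
        + norm (integral\<^sup>L (\<nu> s) (\<lambda>y. K (y - a)) - integral\<^sup>L (\<nu> s) (\<lambda>y. K (y - b)))"
      by (simp only: norm3)
    then show ?thesis using e1 e2 e3 unfolding c_def by (simp add: algebra_simps)
  qed
  have pw: "F \<tau> p \<le> norm (fst p - snd p) + integral {0..\<tau>} (\<lambda>s. c * F s p + LK * D s)"
    if \<tau>: "\<tau> \<in> {0..T}" for \<tau> p
  proof -
    obtain x y where p: "p = (x, y)" by (cases p)
    have hd: "((\<lambda>s. vel vd K (\<mu> s) (\<gamma> s x) - vel vd K (\<nu> s) (g s y)) has_integral
        ((\<gamma> \<tau> x - x) - (g \<tau> y - y))) {0..\<tau>}"
      by (rule has_integral_diff[OF gi[OF \<tau>] hi[OF \<tau>]])
    then have eq: "\<gamma> \<tau> x - g \<tau> y = (x - y) + integral {0..\<tau>} (\<lambda>s. vel vd K (\<mu> s) (\<gamma> s x) - vel vd K (\<nu> s) (g s y))"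
      by (simp add: integral_unique algebra_simps)
    have "norm (integral {0..\<tau>} (\<lambda>s. vel vd K (\<mu> s) (\<gamma> s x) - vel vd K (\<nu> s) (g s y)))
        \<le> integral {0..\<tau>} (\<lambda>s. c * F s p + LK * D s)"
    proof (rule Henstock_Kurzweil_Integration.integral_norm_bound_integral)
      show "(\<lambda>s. vel vd K (\<mu> s) (\<gamma> s x) - vel vd K (\<nu> s) (g s y)) integrable_on {0..\<tau>}"
        using hd by (rule has_integral_integrable)
      show "(\<lambda>s. c * F s p + LK * D s) integrable_on {0..\<tau>}"
        using \<tau> by (intro integrable_continuous_real continuous_intros continuous_on_subset[OF Fc]
            continuous_on_subset[OF Dc]) auto
      fix s assume "s \<in> {0..\<tau>}"
      then have s: "s \<in> {0..T}" using \<tau> by auto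
      show "norm (vel vd K (\<mu> s) (\<gamma> s x) - vel vd K (\<nu> s) (g s y)) \<le> c * F s p + LK * D s"
        using veldiff[OF s, of "\<gamma> s x" "g s y"] unfolding F_def p by simp
    qed
    then show ?thesis unfolding F_def p using eq norm_triangle_ineq[of "x - y"] by (smt (verit) fst_conv snd_conv)
  qed
  have pw2: "F \<tau> p \<le> exp (c * \<tau>) * (norm (fst p - snd p) + LK * integral {0..\<tau>} D)"
    if \<tau>: "\<tau> \<in> {0..T}" for \<tau> p
  proof -
    have "F \<tau> p \<le> exp (c * \<tau>) * (norm (fst p - snd p) + integral {0..\<tau>} (\<lambda>s. LK * D s))"
    proof (rule gronwall1[OF _ c0])
      show "continuous_on {0..\<tau>} (\<lambda>s. F s p)" using \<tau> by (intro continuous_on_subset[OF Fc]) auto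
      show "(\<lambda>s. LK * D s) integrable_on {0..\<tau>}"
        using \<tau> by (intro integrable_continuous_real continuous_intros continuous_on_subset[OF Dc]) auto
      show "\<And>s. s \<in> {0..\<tau>} \<Longrightarrow> 0 \<le> LK * D s" using LK D0 by simp
      fix \<tau>' assume "\<tau>' \<in> {0..\<tau>}"
      then have "\<tau>' \<in> {0..T}" using \<tau> by auto
      then show "F \<tau>' p \<le> norm (fst p - snd p) + integral {0..\<tau>'} (\<lambda>s. c * F s p + LK * D s)" by (rule pw)
    qed (use \<tau> in auto)
    then show ?thesis by simp
  qed
  have Dint: "integral {0..\<tau>} D \<ge> 0" for \<tau> 
  proof (cases "D integrable_on {0..\<tau>}")
    case True then show ?thesis using D0 by (intro Henstock_Kurzweil_Integration.integral_nonneg) auto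
  qed (simp add: not_integrable_integral)
  have C0: "0 \<le> C" unfolding C_def by simp
  have Dle: "D \<tau> \<le> exp (c * \<tau>) * (C + N * LK * integral {0..\<tau>} D)" if \<tau>: "\<tau> \<in> {0..T}" for \<tau>
  proof -
    let ?B = "LK * integral {0..\<tau>} D"
    have ic: "integrable \<pi> (\<lambda>p. exp (c * \<tau>) * (norm (fst p - snd p) + ?B))"
      using cb(7) by (intro integrable_mult_right Bochner_Integration.integrable_add) auto
    have "D \<tau> \<le> (\<integral>p. exp (c * \<tau>) * (norm (fst p - snd p) + ?B) \<partial>\<pi>)"
      unfolding D_def[of \<tau>] by (rule integral_mono[OF Fint[OF \<tau>] ic]) (rule pw2[OF \<tau>])
    also have "\<dots> = exp (c * \<tau>) * (C + ?B * N)"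
      using cb(7) cb(4) cb(1) unfolding C_def by (simp add: Bochner_Integration.integral_add)
    finally show ?thesis by (simp add: algebra_simps)
  qed
  have "D t \<le> (exp (c * t) * C) * exp ((exp (c * t) * N * LK) * t)"
  proof (rule gronwall0)
    show "0 \<le> t" using t by simp
    show "0 \<le> exp (c * t) * N * LK" using N0 LK by simp
    show "continuous_on {0..t} D" using t by (intro continuous_on_subset[OF Dc]) auto
    fix \<tau> assume \<tau>: "\<tau> \<in> {0..t}"
    then have \<tau>T: "\<tau> \<in> {0..T}" using t by auto
    have "exp (c * \<tau>) \<le> exp (c * t)" using \<tau> c0 by (auto intro: mult_left_mono)
    moreover have "0 \<le> C + N * LK * integral {0..\<tau>} D" using C0 N0 LK Dint[of \<tau>] by simp
    ultimately have "exp (c * \<tau>) * (C + N * LK * integral {0..\<tau>} D) \<le> exp (c * t) * (C + N * LK * integral {0..\<tau>} D)"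
      by (rule mult_right_mono)
    with Dle[OF \<tau>T] show "D \<tau> \<le> exp (c * t) * C + exp (c * t) * N * LK * integral {0..\<tau>} D"
      by (simp add: algebra_simps)
  qed
  then show ?thesis using W1le[OF t] unfolding c_def C_def by (simp add: mult.assoc)
qed


theorem mainTheorem5:
  fixes vd K :: "'a::euclidean_space \<Rightarrow> 'a"
    and N :: nat and T \<xi> :: real
    and \<mu>bar \<nu>bar :: "'a measure" and \<mu> \<nu> :: "real \<Rightarrow> 'a measure"
  assumes "N \<ge> 1" and "T > 0"
    and "\<exists>L. L-lipschitz_on UNIV vd" and "Lip vd > 0"
    and "\<exists>L. L-lipschitz_on UNIV K" and "Lip K > 0"
    and "compact (closure {x. K x \<noteq> 0})"
    and "\<xi> = 2 * max (Lip vd) (real N * Lip K)"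
    and "is_solution vd K (real N) T \<mu>bar \<mu>"
    and "is_solution vd K (real N) T \<nu>bar \<nu>"
  shows "\<forall>t\<in>{0<..T}. W1 (\<mu> t) (\<nu> t) \<le> exp (\<xi> * t * (1 + exp (\<xi> * T))) * W1 \<mu>bar \<nu>bar"
proof
  fix t assume t: "t \<in> {0<..T}"
  note asm = assms
  have N: "0 < real N" using assms(1) by simp
  have T: "0 \<le> T" using assms(2) by simp
  have tT: "t \<in> {0..T}" using t by simp
  define Lv where "Lv = Lip vd"
  define LK where "LK = Lip K"
  have lv: "Lv-lipschitz_on UNIV vd" unfolding Lv_def by (rule Lip_lipschitz[OF assms(3)])
  have lk: "LK-lipschitz_on UNIV K" unfolding LK_def by (rule Lip_lipschitz[OF assms(5)])
  have Lv0: "0 < Lv" and LK0: "0 < LK" using assms(4,6) by (auto simp: Lv_def LK_def)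
  have kc: "continuous_on UNIV K" using lk by (rule lipschitz_on_continuous_on)
  define S where "S = closure {x. K x \<noteq> 0}"
  have "compact (K ` S)" unfolding S_def
    by (rule compact_continuous_image[OF continuous_on_subset[OF kc] assms(7)]) auto
  from compact_imp_bounded[OF this] obtain B where B: "\<forall>y\<in>K ` S. norm y \<le> B"
    unfolding bounded_iff by blast
  have kb: "norm (K z) \<le> max B 0" for z
  proof (cases "z \<in> S")
    case True then have "K z \<in> K ` S" by (rule imageI)
    then have "norm (K z) \<le> B" using B by blast
    then show ?thesis by simp
  next
    case False
    have "K z = 0"
    proof (rule ccontr)
      assume "K z \<noteq> 0"
      then have "z \<in> {x. K x \<noteq> 0}" by simp
      then have "z \<in> S" unfolding S_def using closure_subset[of "{x. K x \<noteq> 0}"] by (rule subsetD[rotated])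
      then show False using False by simp
    qed
    then show ?thesis by simp
  qed
  have mub: "\<mu>bar \<in> M1 (real N)" and nub: "\<nu>bar \<in> M1 (real N)"
    using assms(9,10) by (auto simp: is_solution_def)
  define c where "c = Lv + real N * LK"
  define Ebd where "Ebd = exp (\<xi> * t * (1 + exp (\<xi> * T)))"
  have Ebd0: "0 < Ebd" unfolding Ebd_def by simp
  have cxi: "c \<le> \<xi>" unfolding c_def assms(8) Lv_def[symmetric] LK_def[symmetric] by simp
  have axi: "real N * LK \<le> \<xi>" unfolding assms(8) Lv_def[symmetric] LK_def[symmetric] using Lv0 LK0 by simp
  have c0: "0 \<le> c" unfolding c_def using Lv0 LK0 by simp
  have expo: "exp (c * t) * exp (exp (c * t) * (real N * LK) * t) \<le> Ebd"
  proof -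
    have "c * t \<le> \<xi> * t" using cxi t by (intro mult_right_mono) auto
    have e1: "exp (c * t) \<le> exp (\<xi> * T)"
      using cxi t c0 by (simp add: mult_mono)
    have "exp (c * t) * (real N * LK) * t \<le> exp (\<xi> * T) * \<xi> * t"
      using e1 axi t N LK0 by (intro mult_right_mono mult_mono) auto
    then have "c * t + exp (c * t) * (real N * LK) * t \<le> \<xi> * t * (1 + exp (\<xi> * T))"
      using \<open>c * t \<le> \<xi> * t\<close> by (simp add: algebra_simps)
    then show ?thesis unfolding Ebd_def by (simp add: exp_add[symmetric])
  qed
  have key: "W1 (\<mu> t) (\<nu> t) \<le> Ebd * (\<integral> p. norm (fst p - snd p) \<partial>\<pi>)"
    if pi: "\<pi> \<in> couplings \<mu>bar \<nu>bar" for \<pi>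
  proof -
    have "W1 (\<mu> t) (\<nu> t) \<le> exp (c * t) * (\<integral> p. norm (fst p - snd p) \<partial>\<pi>) * exp (exp (c * t) * (real N * LK) * t)"
      unfolding c_def by (rule main_est[OF N T lv lk kb assms(9) assms(10) pi tT])
    also have "\<dots> = (exp (c * t) * exp (exp (c * t) * (real N * LK) * t)) * (\<integral> p. norm (fst p - snd p) \<partial>\<pi>)"
      by (simp add: algebra_simps)
    also have "\<dots> \<le> Ebd * (\<integral> p. norm (fst p - snd p) \<partial>\<pi>)"
      using expo by (intro mult_right_mono) auto
    finally show ?thesis .
  qed
  have fin: "(INF \<pi>\<in>couplings \<mu>bar \<nu>bar. \<integral>\<^sup>+ p. ennreal (norm (fst p - snd p)) \<partial>\<pi>) = ennreal (W1 \<mu>bar \<nu>bar)"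
    by (rule W1_finite[OF mub nub N])
  have W0: "0 \<le> W1 \<mu>bar \<nu>bar" unfolding W1_def by simp
  have "W1 (\<mu> t) (\<nu> t) \<le> Ebd * W1 \<mu>bar \<nu>bar + e" if e: "0 < e" for e
  proof -
    have "(INF \<pi>\<in>couplings \<mu>bar \<nu>bar. \<integral>\<^sup>+ p. ennreal (norm (fst p - snd p)) \<partial>\<pi>) < ennreal (W1 \<mu>bar \<nu>bar + e / Ebd)"
      unfolding fin using e Ebd0 W0 by (simp add: ennreal_lessI)
    then obtain \<pi> where pi: "\<pi> \<in> couplings \<mu>bar \<nu>bar"
      and lt: "(\<integral>\<^sup>+ p. ennreal (norm (fst p - snd p)) \<partial>\<pi>) < ennreal (W1 \<mu>bar \<nu>bar + e / Ebd)"
      by (auto simp: INF_less_iff)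
    have "ennreal (\<integral> p. norm (fst p - snd p) \<partial>\<pi>) < ennreal (W1 \<mu>bar \<nu>bar + e / Ebd)"
      using lt cost_eq[OF pi mub nub] N by simp
    then have "(\<integral> p. norm (fst p - snd p) \<partial>\<pi>) < W1 \<mu>bar \<nu>bar + e / Ebd"
      by (simp add: ennreal_less_iff)
    then have "Ebd * (\<integral> p. norm (fst p - snd p) \<partial>\<pi>) \<le> Ebd * (W1 \<mu>bar \<nu>bar + e / Ebd)"
      using Ebd0 by (intro mult_left_mono) auto
    also have "\<dots> = Ebd * W1 \<mu>bar \<nu>bar + e" using Ebd0 by (simp add: algebra_simps)
    finally show ?thesis using key[OF pi] by linarith
  qed
  then have "W1 (\<mu> t) (\<nu> t) \<le> Ebd * W1 \<mu>bar \<nu>bar" by (rule field_le_epsilon)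
  then show "W1 (\<mu> t) (\<nu> t) \<le> exp (\<xi> * t * (1 + exp (\<xi> * T))) * W1 \<mu>bar \<nu>bar"
    unfolding Ebd_def .
qed

end
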